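(* For $v\in\mathbb{R}$ consider the system of ODEs for $(a,b,r,s)(\xi)\in\mathbb{R}^4$: $$\partial_\xi a=r,\qquad \partial_\xi b=s,\qquad \partial_\xi r=-vr-\frac{sa}{2}+\frac{a|r|}{2},\qquad \partial_\xi s=-vs-ra.$$ Consider the boundary conditions (H1) $(a,b,r,s)(-\infty)=(a_0,b_0,0,0)$ and $(a,b,r,s)(+\infty)=(0,2,0,0)$; (H2) $(a,b,r,s)(-\infty)=(0,-2,0,0)$ and $(a,b,r,s)(+\infty)=(a_0,b_0,0,0)$. Then: 1. For every $v>0$ there are exactly two pairs $(a_0,b_0)$ for which there exists a non-constant trajectory satisfying (H1), namely $(a_0,b_0)=(4v,-8v+2)$, for which $r(\xi)<0$ for all $\xi\in\mathbb{R}$ along the trajectory, and $(a_0,b_0)=(-4v,-8v+2)$, for which $r(\xi)>0$ for all $\xi$. Also, for $v>0$ there is no non-constant trajectory satisfying (H2) for any $(a_0,b_0)$. 2. For $v=0$ there is no non-constant trajectory converging to equilibria as $\xi\to\pm\infty$ such that $(a,b,r,s)(-\infty)=(0,b_0,0,0)$ or $(a,b,r,s)(+\infty)=(0,b_0,0,0)$, for any $b_0\in\mathbb{R}$. 3. For every $v<0$ there are exactly two pairs $(a_0,b_0)$ for which there exists a non-constant trajectory satisfying (H2), namely $(a_0,b_0)=(4v,-8v-2)$, with $r(\xi)<0$ for all $\xi$, and $(a_0,b_0)=(-4v,-8v-2)$, with $r(\xi)>0$ for all $\xi$. Also, for $v<0$ there is no non-constant trajectory satisfying (H1) for any $(a_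0,b_0)$.
   Context: A trajectory is a solution $(a,b,r,s):\mathbb{R}\to\mathbb{R}^4$ of the system defined for all $\xi\in\mathbb{R}$; the equilibria of the system are exactly the points with $r=s=0$. *)

theory Defs
  imports "HOL-Analysis.Analysis"
begin

definition trajectory :: "real \<Rightarrow> (real \<Rightarrow> real) \<Rightarrow> (real \<Rightarrow> real) \<Rightarrow> (real \<Rightarrow> real) \<Rightarrow> (real \<Rightarrow> real) \<Rightarrow> bool" where
  "trajectory v a b r s \<longleftrightarrow>
     (\<forall>x. (a has_real_derivative r x) (at x)
        \<and> (b has_real_derivative s x) (at x)
        \<and> (r has_real_derivative (- v * r x - s x * a x / 2 + a x * \<bar>r x\<bar> / 2)) (at x)
        \<and> (s has_real_derivative (- v * s x - r x * a x)) (at x))"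

definition state :: "(real \<Rightarrow> real) \<Rightarrow> (real \<Rightarrow> real) \<Rightarrow> (real \<Rightarrow> real) \<Rightarrow> (real \<Rightarrow> real) \<Rightarrow> real \<Rightarrow> real \<times> real \<times> real \<times> real" where
  "state a b r s x = (a x, b x, r x, s x)"

definition nonconstant :: "(real \<Rightarrow> real) \<Rightarrow> (real \<Rightarrow> real) \<Rightarrow> (real \<Rightarrow> real) \<Rightarrow> (real \<Rightarrow> real) \<Rightarrow> bool" where
  "nonconstant a b r s \<longleftrightarrow> (\<exists>x y. state a b r s x \<noteq> state a b r s y)"

definition H1 :: "real \<Rightarrow> real \<Rightarrow> (real \<Rightarrow> real) \<Rightarrow> (real \<Rightarrow> real) \<Rightarrow> (real \<Rightarrow> real) \<Rightarrow> (real \<Rightarrow> real) \<Rightarrow> bool" where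
  "H1 a0 b0 a b r s \<longleftrightarrow>
     (state a b r s \<longlongrightarrow> (a0, b0, 0, 0)) at_bot \<and> (state a b r s \<longlongrightarrow> (0, 2, 0, 0)) at_top"

definition H2 :: "real \<Rightarrow> real \<Rightarrow> (real \<Rightarrow> real) \<Rightarrow> (real \<Rightarrow> real) \<Rightarrow> (real \<Rightarrow> real) \<Rightarrow> (real \<Rightarrow> real) \<Rightarrow> bool" where
  "H2 a0 b0 a b r s \<longleftrightarrow>
     (state a b r s \<longlongrightarrow> (0, -2, 0, 0)) at_bot \<and> (state a b r s \<longlongrightarrow> (a0, b0, 0, 0)) at_top"

end

theory Submission imports Defs "HOL-Real_Asymp.Real_Asymp" begin

lemma deriv_abs3: "((\<lambda>t::real. \<bar>t\<bar>^3) has_real_derivative 3*t*\<bar>t\<bar>) (at t)"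
proof (cases "t > 0")
  case True
  have "((\<lambda>t::real. t^3) has_real_derivative 3*t*\<bar>t\<bar>) (at t)"
    using True by (auto intro!: derivative_eq_intros simp: power2_eq_square)
  then show ?thesis
    by (rule has_field_derivative_transform_within_open[where S="{0<..}"])
       (use True in \<open>auto simp: power2_eq_square\<close>)
next
  case f: False
  show ?thesis
  proof (cases "t < 0")
    case True
    have "((\<lambda>t::real. - (t^3)) has_real_derivative 3*t*\<bar>t\<bar>) (at t)"
      using True by (auto intro!: derivative_eq_intros simp: power2_eq_square)
    then show ?thesis
      by (rule has_field_derivative_transform_within_open[where S="{..<0}"])
         (use True in \<open>auto simp: power2_eq_square\<close>)
  next
    case False
    with f have t0: "t = 0" by auto
    have eq: "(\<lambda>y::real. (\<bar>y\<bar>^3 - \<bar>0\<bar>^3) / (y - 0)) = (\<lambda>y. y * \<bar>y\<bar>)"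
    proof
      fix y :: real
      show "(\<bar>y\<bar>^3 - \<bar>0\<bar>^3) / (y - 0) = y * \<bar>y\<bar>"
        by (cases "y = 0") (auto simp: power3_eq_cube field_simps abs_mult_self_eq)
    qed
    have "((\<lambda>y::real. y * \<bar>y\<bar>) \<longlongrightarrow> 0 * \<bar>0\<bar>) (at 0)"
      by (intro tendsto_intros)
    then show ?thesis unfolding t0 has_field_derivative_iff eq by simp
  qed
qed

lemma ivt_any:
  fixes f :: "real \<Rightarrow> real"
  assumes "\<And>x. isCont f x" "f x \<le> y" "y \<le> f z"
  shows "\<exists>w. f w = y"
proof (cases "x \<le> z")
  case True
  then show ?thesis using IVT[of f x y z] assms by auto
next
  case False
  then show ?thesis using IVT2[of f x y z] assms by auto
qed

lemma incr_bounds: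
  fixes f :: "real \<Rightarrow> real"
  assumes inc: "\<And>x y. x < y \<Longrightarrow> f x < f y" and l1: "(f \<longlongrightarrow> l1) at_bot" and l2: "(f \<longlongrightarrow> l2) at_top"
  shows "l1 < f x \<and> f x < l2"
proof
  have "l1 \<le> f (x - 1)"
  proof (rule tendsto_upperbound[OF l1])
    show "\<forall>\<^sub>F i in at_bot. f i \<le> f (x - 1)"
      unfolding eventually_at_bot_linorder
      by (rule exI[of _ "x - 1"]) (metis inc order.order_iff_strict order.strict_implies_order)
  qed simp
  also have "\<dots> < f x" by (rule inc) simp
  finally show "l1 < f x" .
next
  have "f x < f (x + 1)" by (rule inc) simp
  also have "f (x + 1) \<le> l2"
  proof (rule tendsto_lowerbound[OF l2])
    show "\<forall>\<^sub>F i in at_top. f (x + 1) \<le> f i"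
      unfolding eventually_at_top_linorder
      by (rule exI[of _ "x + 1"]) (metis inc order.order_iff_strict order.strict_implies_order)
  qed simp
  finally show "f x < l2" .
qed

lemma main:
  fixes v am bm ap bp :: real and a b r s :: "real \<Rightarrow> real"
  assumes tr: "trajectory v a b r s" and nc: "nonconstant a b r s"
    and lb: "(state a b r s \<longlongrightarrow> (am, bm, 0, 0)) at_bot"
    and lt: "(state a b r s \<longlongrightarrow> (ap, bp, 0, 0)) at_top"
  shows "\<exists>e c K. (e = 1 \<or> e = -1) \<and> (c = -e \<or> c = 2 * e)
     \<and> (\<forall>x. r x \<noteq> 0 \<and> \<bar>r x\<bar> = e * r x \<and> s x = c * r x \<and> r x = (e - c)/4 * (a x)^2 - v * a x + K)
     \<and> (e - c)/4 * am^2 - v * am + K = 0 \<and> (e - c)/4 * ap^2 - v * ap + K = 0 \<and> bm - c * am = bp - c * ap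
     \<and> (\<forall>x. (e = 1 \<longrightarrow> am < a x \<and> a x < ap) \<and> (e = -1 \<longrightarrow> ap < a x \<and> a x < am))"
proof -
  have la_b: "(a \<longlongrightarrow> am) at_bot" using tendsto_fst[OF lb] by (simp add: state_def)
  have lb_b: "(b \<longlongrightarrow> bm) at_bot" using tendsto_fst[OF tendsto_snd[OF lb]] by (simp add: state_def)
  have lr_b: "(r \<longlongrightarrow> 0) at_bot" using tendsto_fst[OF tendsto_snd[OF tendsto_snd[OF lb]]] by (simp add: state_def)
  have ls_b: "(s \<longlongrightarrow> 0) at_bot" using tendsto_snd[OF tendsto_snd[OF tendsto_snd[OF lb]]] by (simp add: state_def)
  have la_t: "(a \<longlongrightarrow> ap) at_top" using tendsto_fst[OF lt] by (simp add: state_def)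
  have lb_t: "(b \<longlongrightarrow> bp) at_top" using tendsto_fst[OF tendsto_snd[OF lt]] by (simp add: state_def)
  have lr_t: "(r \<longlongrightarrow> 0) at_top" using tendsto_fst[OF tendsto_snd[OF tendsto_snd[OF lt]]] by (simp add: state_def)
  have ls_t: "(s \<longlongrightarrow> 0) at_top" using tendsto_snd[OF tendsto_snd[OF tendsto_snd[OF lt]]] by (simp add: state_def)
  have da: "\<And>x. (a has_real_derivative r x) (at x)"
   and db: "\<And>x. (b has_real_derivative s x) (at x)"
   and dr: "\<And>x. (r has_real_derivative (- v * r x - s x * a x / 2 + a x * \<bar>r x\<bar> / 2)) (at x)"
   and ds: "\<And>x. (s has_real_derivative (- v * s x - r x * a x)) (at x)"
    using tr unfolding trajectory_def by auto
  have ca: "\<And>x. isCont a x" using da by (rule DERIV_isCont)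
  have cb: "\<And>x. isCont b x" using db by (rule DERIV_isCont)
  have cr: "\<And>x. isCont r x" using dr by (rule DERIV_isCont)
  have cs: "\<And>x. isCont s x" using ds by (rule DERIV_isCont)
  define G where "G = (\<lambda>x. (s x ^ 3 - 3 * s x * (r x)^2 - 2 * \<bar>r x\<bar>^3) * exp (3 * v * x))"
  have dG: "(G has_real_derivative 0) (at x)" for x
  proof -
    have d3: "((\<lambda>x. \<bar>r x\<bar>^3) has_real_derivative 3 * r x * \<bar>r x\<bar> * (- v * r x - s x * a x / 2 + a x * \<bar>r x\<bar> / 2)) (at x)"
      using DERIV_chain2[OF deriv_abs3 dr] .
    have "(G has_real_derivative
       ((3 * (s x)^2 * (- v * s x - r x * a x) - 3 * ((- v * s x - r x * a x) * (r x)^2 + s x * (2 * r x * (- v * r x - s x * a x / 2 + a x * \<bar>r x\<bar> / 2)))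
         - 2 * (3 * r x * \<bar>r x\<bar> * (- v * r x - s x * a x / 2 + a x * \<bar>r x\<bar> / 2))) * exp (3 * v * x)
        + (s x ^ 3 - 3 * s x * (r x)^2 - 2 * \<bar>r x\<bar>^3) * (exp (3 * v * x) * (3 * v)))) (at x)"
      unfolding G_def
      by (rule derivative_eq_intros d3 ds dr refl | simp)+
    moreover have "((3 * (s x)^2 * (- v * s x - r x * a x) - 3 * ((- v * s x - r x * a x) * (r x)^2 + s x * (2 * r x * (- v * r x - s x * a x / 2 + a x * \<bar>r x\<bar> / 2)))
         - 2 * (3 * r x * \<bar>r x\<bar> * (- v * r x - s x * a x / 2 + a x * \<bar>r x\<bar> / 2))) * exp (3 * v * x)
        + (s x ^ 3 - 3 * s x * (r x)^2 - 2 * \<bar>r x\<bar>^3) * (exp (3 * v * x) * (3 * v))) = 0"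
    proof -
      have t2: "\<bar>r x\<bar> * \<bar>r x\<bar> = r x * r x" by (simp add: abs_mult_self_eq)
      show ?thesis using t2 by algebra
    qed
    ultimately show ?thesis by simp
  qed
  have Gc: "G x = G 0" for x using dG DERIV_isconst_all by blast
  obtain g where Gfun: "G = (\<lambda>x. g)" using Gc by auto
  have P0: "((\<lambda>x. s x ^ 3 - 3 * s x * (r x)^2 - 2 * \<bar>r x\<bar>^3) \<longlongrightarrow> 0) at_top"
    by (auto intro!: tendsto_eq_intros ls_t lr_t)
  have P0b: "((\<lambda>x. s x ^ 3 - 3 * s x * (r x)^2 - 2 * \<bar>r x\<bar>^3) \<longlongrightarrow> 0) at_bot"
    by (auto intro!: tendsto_eq_intros ls_b lr_b)
  have G00: "g = 0"
  proof (cases "v > 0")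
    case True
    have "((\<lambda>x. exp (3 * v * x)) \<longlongrightarrow> 0) at_bot" using True by real_asymp
    then have "(G \<longlongrightarrow> 0 * 0) at_bot" unfolding G_def by (intro tendsto_mult P0b)
    then have "((\<lambda>x::real. g) \<longlongrightarrow> 0) at_bot" using Gfun by simp
    then show ?thesis by (simp add: tendsto_const_iff)
  next
    case False
    have "((\<lambda>x. exp (3 * v * x)) \<longlongrightarrow> (if v = 0 then 1 else 0)) at_top"
    proof (cases "v = 0")
      case True then show ?thesis by simp
    next
      case f2: False
      with False have "v < 0" by simp
      then have "((\<lambda>x. exp (3 * v * x)) \<longlongrightarrow> 0) at_top" by real_asymp
      with f2 show ?thesis by simp
    qed
    then have "(G \<longlongrightarrow> 0 * (if v = 0 then 1 else 0)) at_top" unfolding G_def by (intro tendsto_mult P0)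
    then have "((\<lambda>x::real. g) \<longlongrightarrow> 0) at_top" using Gfun by simp
    then show ?thesis by (simp add: tendsto_const_iff)
  qed
  have pw: "s x = - \<bar>r x\<bar> \<or> s x = 2 * \<bar>r x\<bar>" for x
  proof -
    have "s x ^ 3 - 3 * s x * (r x)^2 - 2 * \<bar>r x\<bar>^3 = 0"
      using fun_cong[OF Gfun, of x] G00 unfolding G_def by simp
    moreover have t2: "\<bar>r x\<bar> * \<bar>r x\<bar> = r x * r x" by (simp add: abs_mult_self_eq)
    ultimately have "(s x + \<bar>r x\<bar>)^2 * (s x - 2 * \<bar>r x\<bar>) = 0" by algebra
    then show ?thesis by auto
  qed
  obtain M where M: "\<And>x. \<bar>a x\<bar> \<le> M"
  proof -
    obtain T where T: "\<And>x. x \<ge> T \<Longrightarrow> dist (a x) ap < 1"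
      using la_t[unfolded tendsto_iff, rule_format, of 1] by (auto simp: eventually_at_top_linorder)
    obtain S0 where S0: "\<And>x. x \<le> S0 \<Longrightarrow> dist (a x) am < 1"
      using la_b[unfolded tendsto_iff, rule_format, of 1] by (auto simp: eventually_at_bot_linorder)
    define S where "S = min S0 T"
    have "S \<le> T" by (simp add: S_def)
    from isCont_bounded[OF this, of "\<lambda>x. \<bar>a x\<bar>"] ca
    obtain M0 where M0: "\<And>x. S \<le> x \<and> x \<le> T \<Longrightarrow> \<bar>a x\<bar> \<le> M0" by (auto intro: continuous_intros)
    show ?thesis
    proof (rule that[of "max M0 (max (\<bar>ap\<bar> + 1) (\<bar>am\<bar> + 1))"])
      fix x
      consider "x \<ge> T" | "x \<le> S" | "S \<le> x \<and> x \<le> T" by linarith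
      then show "\<bar>a x\<bar> \<le> max M0 (max (\<bar>ap\<bar> + 1) (\<bar>am\<bar> + 1))"
      proof cases
        case 1 then show ?thesis using T[of x] by (auto simp: dist_real_def)
      next
        case 2 then have "x \<le> S0" by (simp add: S_def)
        then show ?thesis using S0[of x] by (auto simp: dist_real_def)
      next
        case 3 then show ?thesis using M0[of x] by auto
      qed
    qed
  qed
  have rnz: "r x \<noteq> 0" for x
  proof
    assume rx0: "r x = 0"
    define L where "L = \<bar>v\<bar> + 2 * M"
    have bdab: "\<bar>r y * (- v * r y - s y * a y / 2 + a y * \<bar>r y\<bar> / 2)\<bar> \<le> L * (r y)^2" for y
    proof -
      have sy: "\<bar>s y\<bar> \<le> 2 * \<bar>r y\<bar>" using pw[of y] by auto
      have r2: "(r y)^2 = \<bar>r y\<bar> * \<bar>r y\<bar>" by (simp add: power2_eq_square abs_mult_self_eq)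
      have e1: "\<bar>v * (r y)^2\<bar> = \<bar>v\<bar> * (r y)^2" by (simp add: abs_mult)
      have e3: "\<bar>r y * s y * a y\<bar> \<le> \<bar>r y\<bar> * (2 * \<bar>r y\<bar>) * M"
        unfolding abs_mult by (intro mult_mono sy M) auto
      have e4: "\<bar>a y * r y * \<bar>r y\<bar>\<bar> \<le> \<bar>r y\<bar> * \<bar>r y\<bar> * M"
      proof -
        have "\<bar>a y * r y * \<bar>r y\<bar>\<bar> = \<bar>r y\<bar> * \<bar>r y\<bar> * \<bar>a y\<bar>" by (simp add: abs_mult)
        also have "\<dots> \<le> \<bar>r y\<bar> * \<bar>r y\<bar> * M" by (intro mult_left_mono M) auto
        finally show ?thesis .
      qed
      have eq: "r y * (- v * r y - s y * a y / 2 + a y * \<bar>r y\<bar> / 2)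
           = - (v * (r y)^2) - (r y * s y * a y) / 2 + a y * r y * \<bar>r y\<bar> / 2"
        by (simp add: power2_eq_square algebra_simps)
      have L: "\<bar>v\<bar> * (r y)^2 + \<bar>r y\<bar> * (2 * \<bar>r y\<bar>) * M / 2 + \<bar>r y\<bar> * \<bar>r y\<bar> * M / 2 \<le> L * (r y)^2"
        unfolding L_def r2 using M[of 0] by (simp add: algebra_simps mult_right_mono)
      show ?thesis unfolding eq abs_le_iff
        using e1 e3 e4 L abs_le_iff[of "v * (r y)^2"] abs_le_iff[of "r y * s y * a y"] abs_le_iff[of "a y * r y * \<bar>r y\<bar>"]
          abs_ge_self[of "v * (r y)^2"] abs_ge_minus_self[of "v * (r y)^2"]
          abs_ge_self[of "r y * s y * a y"] abs_ge_minus_self[of "r y * s y * a y"]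
          abs_ge_self[of "a y * r y * \<bar>r y\<bar>"] abs_ge_minus_self[of "a y * r y * \<bar>r y\<bar>"]
        by linarith
    qed
    have bd: "r y * (- v * r y - s y * a y / 2 + a y * \<bar>r y\<bar> / 2) \<le> L * (r y)^2" for y
      using bdab[of y] by linarith
    have fwd: "r y = 0" if "x \<le> y" for y
    proof -
      define H where "H = (\<lambda>y. (r y)^2 * exp (- (2 * L) * y))"
      have "H y \<le> H x"
      proof (rule DERIV_nonpos_imp_nonincreasing[OF that])
        fix z
        have "(H has_real_derivative (2 * r z * (- v * r z - s z * a z / 2 + a z * \<bar>r z\<bar> / 2)) * exp (- (2 * L) * z)
                + (r z)^2 * (exp (- (2 * L) * z) * (- (2 * L)))) (at z)"
          unfolding H_def by (rule derivative_eq_intros dr refl | simp)+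
        moreover have "(2 * r z * (- v * r z - s z * a z / 2 + a z * \<bar>r z\<bar> / 2)) * exp (- (2 * L) * z)
                + (r z)^2 * (exp (- (2 * L) * z) * (- (2 * L))) \<le> 0"
        proof -
          have "(2 * r z * (- v * r z - s z * a z / 2 + a z * \<bar>r z\<bar> / 2)) * exp (- (2 * L) * z)
                + (r z)^2 * (exp (- (2 * L) * z) * (- (2 * L)))
               = 2 * exp (- (2 * L) * z) * (r z * (- v * r z - s z * a z / 2 + a z * \<bar>r z\<bar> / 2) - L * (r z)^2)"
            by (simp add: algebra_simps)
          also have "\<dots> \<le> 0" using bd[of z] by (simp add: mult_nonneg_nonpos)
          finally show ?thesis .
        qed
        ultimately show "\<exists>y. (H has_real_derivative y) (at z) \<and> y \<le> 0" by blast
      qed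
      then have "(r y)^2 * exp (- (2 * L) * y) \<le> 0" using rx0 by (simp add: H_def)
      then have "(r y)^2 \<le> 0" by (simp add: mult_le_0_iff)
      then show ?thesis by simp
    qed
    have bwd: "r y = 0" if "y \<le> x" for y
    proof -
      define H where "H = (\<lambda>y. (r y)^2 * exp ((2 * L) * y))"
      have "H y \<le> H x"
      proof (rule DERIV_nonneg_imp_nondecreasing[OF that])
        fix z
        have "(H has_real_derivative (2 * r z * (- v * r z - s z * a z / 2 + a z * \<bar>r z\<bar> / 2)) * exp ((2 * L) * z)
                + (r z)^2 * (exp ((2 * L) * z) * (2 * L))) (at z)"
          unfolding H_def by (rule derivative_eq_intros dr refl | simp)+
        moreover have "(2 * r z * (- v * r z - s z * a z / 2 + a z * \<bar>r z\<bar> / 2)) * exp ((2 * L) * z)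
                + (r z)^2 * (exp ((2 * L) * z) * (2 * L)) \<ge> 0"
        proof -
          have bd': "- (r z * (- v * r z - s z * a z / 2 + a z * \<bar>r z\<bar> / 2)) \<le> L * (r z)^2"
            using bdab[of z] by linarith
          have "(2 * r z * (- v * r z - s z * a z / 2 + a z * \<bar>r z\<bar> / 2)) * exp ((2 * L) * z)
                + (r z)^2 * (exp ((2 * L) * z) * (2 * L))
               = 2 * exp ((2 * L) * z) * (r z * (- v * r z - s z * a z / 2 + a z * \<bar>r z\<bar> / 2) + L * (r z)^2)"
            by (simp add: algebra_simps)
          also have "\<dots> \<ge> 0" using bd' by simp
          finally show ?thesis .
        qed
        ultimately show "\<exists>y. (H has_real_derivative y) (at z) \<and> y \<ge> 0" by blast
      qed
      then have "(r y)^2 * exp ((2 * L) * y) \<le> 0" using rx0 by (simp add: H_def)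
      then have "(r y)^2 \<le> 0" by (simp add: mult_le_0_iff)
      then show ?thesis by simp
    qed
    have r0: "r y = 0" for y using fwd bwd by (cases "x \<le> y") auto
    have s0: "s y = 0" for y using pw[of y] r0[of y] by auto
    have ac: "a y = a 0" for y using DERIV_isconst_all[of a y 0] da r0 by simp
    have bc: "b y = b 0" for y using DERIV_isconst_all[of b y 0] db s0 by simp
    have "state a b r s y = state a b r s z" for y z
      unfolding state_def using ac[of y] ac[of z] bc[of y] bc[of z] r0 s0 by simp
    with nc show False unfolding nonconstant_def by blast
  qed
  have sign: "(\<forall>x. r x > 0) \<or> (\<forall>x. r x < 0)"
  proof (cases "r 0 > 0")
    case True
    have "r x > 0" for x
    proof (rule ccontr)
      assume "\<not> r x > 0" then have "r x \<le> 0" by simp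
      from ivt_any[of r x 0 0, OF cr this] True obtain w where "r w = 0" by auto
      with rnz show False by auto
    qed
    then show ?thesis by auto
  next
    case False then have r0: "r 0 < 0" using rnz[of 0] by linarith
    have "r x < 0" for x
    proof (rule ccontr)
      assume "\<not> r x < 0" then have "0 \<le> r x" by simp
      from ivt_any[of r 0 0 x, OF cr _ this] r0 obtain w where "r w = 0" by auto
      with rnz show False by auto
    qed
    then show ?thesis by auto
  qed
  obtain e where e: "e = 1 \<or> e = -1" and ae: "\<And>x. \<bar>r x\<bar> = e * r x"
  proof (cases "\<forall>x. r x > 0")
    case True then show ?thesis using that[of 1] by (simp add: less_imp_le)
  next
    case False then have "\<forall>x. r x < 0" using sign by auto
    then show ?thesis using that[of "-1"] by (simp add: less_imp_le)
  qed
  define k where "k = (\<lambda>x. s x / \<bar>r x\<bar>)"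
  have ck: "isCont k x" for x unfolding k_def using rnz[of x] cs[of x] cr[of x]
    by (auto intro!: continuous_intros)
  have kv: "k x = -1 \<or> k x = 2" for x unfolding k_def using pw[of x] rnz[of x] by auto
  have kx: "s x = k x * \<bar>r x\<bar>" for x unfolding k_def using rnz[of x] by simp
  obtain c0 where c0: "c0 = -1 \<or> c0 = 2" and sc: "\<And>x. s x = c0 * \<bar>r x\<bar>"
  proof (cases "k 0 = -1")
    case True
    have "k x = -1" for x
    proof (rule ccontr)
      assume "k x \<noteq> -1" then have "k x = 2" using kv by auto
      from ivt_any[of k 0 "1/2" x, OF ck] True this obtain w where "k w = 1/2" by auto
      with kv[of w] show False by auto
    qed
    then show ?thesis using that[of "-1"] kx by auto
  next
    case False then have k0: "k 0 = 2" using kv by auto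
    have "k x = 2" for x
    proof (rule ccontr)
      assume "k x \<noteq> 2" then have "k x = -1" using kv by auto
      from ivt_any[of k x "1/2" 0, OF ck] k0 this obtain w where "k w = 1/2" by auto
      with kv[of w] show False by auto
    qed
    then show ?thesis using that[of "2"] kx by auto
  qed
  define c where "c = c0 * e"
  have src: "s x = c * r x" for x using sc[of x] ae[of x] by (simp add: c_def)
  have cc: "c = -e \<or> c = 2 * e" using c0 by (auto simp: c_def)
  define \<phi> where "\<phi> = (\<lambda>x. r x - ((e - c)/4 * (a x)^2 - v * a x))"
  have d\<phi>: "(\<phi> has_real_derivative 0) (at x)" for x
  proof -
    have "(\<phi> has_real_derivative (- v * r x - s x * a x / 2 + a x * \<bar>r x\<bar> / 2) - ((e - c)/4 * (2 * a x * r x) - v * r x)) (at x)"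
      unfolding \<phi>_def by (rule derivative_eq_intros dr da refl | simp)+
    moreover have "(- v * r x - s x * a x / 2 + a x * \<bar>r x\<bar> / 2) - ((e - c)/4 * (2 * a x * r x) - v * r x) = 0"
      unfolding src ae by (simp add: field_simps)
    ultimately show ?thesis by (rule DERIV_cong)
  qed
  define K where "K = \<phi> 0"
  have \<phi>c: "\<phi> = (\<lambda>x. K)" using DERIV_isconst_all[OF allI[OF d\<phi>]] by (auto simp: K_def)
  have rK: "r x = (e - c)/4 * (a x)^2 - v * a x + K" for x using fun_cong[OF \<phi>c, of x] by (simp add: \<phi>_def)
  have "(\<phi> \<longlongrightarrow> 0 - ((e - c)/4 * am^2 - v * am)) at_bot" unfolding \<phi>_def
    by (intro tendsto_intros lr_b la_b)
  then have Km: "(e - c)/4 * am^2 - v * am + K = 0" unfolding \<phi>c by (simp add: tendsto_const_iff)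
  have "(\<phi> \<longlongrightarrow> 0 - ((e - c)/4 * ap^2 - v * ap)) at_top" unfolding \<phi>_def
    by (intro tendsto_intros lr_t la_t)
  then have Kp: "(e - c)/4 * ap^2 - v * ap + K = 0" unfolding \<phi>c by (simp add: tendsto_const_iff)
  define \<psi> where "\<psi> = (\<lambda>x. b x - c * a x)"
  have d\<psi>: "(\<psi> has_real_derivative 0) (at x)" for x
  proof -
    have "(\<psi> has_real_derivative s x - c * r x) (at x)"
      unfolding \<psi>_def by (rule derivative_eq_intros db da refl | simp)+
    then show ?thesis by (simp add: src)
  qed
  define B where "B = \<psi> 0"
  have \<psi>c: "\<psi> = (\<lambda>x. B)" using DERIV_isconst_all[OF allI[OF d\<psi>]] by (auto simp: B_def)
  have "(\<psi> \<longlongrightarrow> bm - c * am) at_bot" unfolding \<psi>_def by (intro tendsto_intros lb_b la_b)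
  then have Bm: "bm - c * am = B" unfolding \<psi>c by (simp add: tendsto_const_iff)
  have "(\<psi> \<longlongrightarrow> bp - c * ap) at_top" unfolding \<psi>_def by (intro tendsto_intros lb_t la_t)
  then have Bp: "bp - c * ap = B" unfolding \<psi>c by (simp add: tendsto_const_iff)
  have mono1: "am < a x \<and> a x < ap" if e1: "e = 1" for x
  proof -
    have rp: "r y > 0" for y using ae[of y] rnz[of y] e1 by (cases "r y > 0") auto
    have inc: "a y < a z" if yz: "y < z" for y z
    proof (rule DERIV_pos_imp_increasing[OF yz])
      fix t show "\<exists>d. (a has_real_derivative d) (at t) \<and> d > 0" using da[of t] rp[of t] by blast
    qed
    show "am < a x \<and> a x < ap" by (rule incr_bounds[OF inc la_b la_t])
  qed
  have mono2: "ap < a x \<and> a x < am" if e1: "e = -1" for x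
  proof -
    have rn: "r y < 0" for y using ae[of y] rnz[of y] e1 by (cases "r y < 0") auto
    have dec: "a y > a z" if yz: "y < z" for y z
    proof (rule DERIV_neg_imp_decreasing[OF yz])
      fix t show "\<exists>d. (a has_real_derivative d) (at t) \<and> d < 0" using da[of t] rn[of t] by blast
    qed
    have inc: "- a y < - a z" if "y < z" for y z using dec[OF that] by simp
    have "- am < - a x \<and> - a x < - ap"
      by (rule incr_bounds[OF inc tendsto_minus[OF la_b] tendsto_minus[OF la_t]])
    then show "ap < a x \<and> a x < am" by simp
  qed
  have mono: "(e = 1 \<longrightarrow> am < a x \<and> a x < ap) \<and> (e = -1 \<longrightarrow> ap < a x \<and> a x < am)" for x
    using mono1[of x] mono2[of x] by blast
  have all: "\<forall>x. r x \<noteq> 0 \<and> \<bar>r x\<bar> = e * r x \<and> s x = c * r x \<and> r x = (e - c)/4 * (a x)^2 - v * a x + K"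
    using rnz ae src rK by blast
  have BB: "bm - c * am = bp - c * ap" using Bm Bp by simp
  have mono': "\<forall>x. (e = 1 \<longrightarrow> am < a x \<and> a x < ap) \<and> (e = -1 \<longrightarrow> ap < a x \<and> a x < am)"
    using mono by blast
  show ?thesis
    by (rule exI[of _ e], rule exI[of _ c], rule exI[of _ K]) (intro conjI e cc all Km Kp BB mono')
qed

lemma alg1:
  fixes D \<sigma> v :: real
  assumes "D \<noteq> 0" "\<sigma> * \<sigma> = 1"
  shows "\<sigma> * (4 * \<sigma> * v / D)^2 / 4 - v * (4 * \<sigma> * v / D) = - 4 * \<sigma> * v^2 * (D - 1) / D^2"
proof -
  have "\<sigma> * (4 * \<sigma> * v / D)^2 / 4 = (\<sigma> * \<sigma>) * \<sigma> * 4 * v^2 / D^2"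
    by (simp add: power_divide power_mult_distrib power2_eq_square)
  also have "\<dots> = 4 * \<sigma> * v^2 / D^2" using assms(2) by simp
  finally have 1: "\<sigma> * (4 * \<sigma> * v / D)^2 / 4 = 4 * \<sigma> * v^2 / D^2" .
  have 2: "v * (4 * \<sigma> * v / D) = 4 * \<sigma> * v^2 * D / D^2" using assms(1) by (simp add: power2_eq_square field_simps)
  show ?thesis unfolding 1 2 using assms(1) by (simp add: field_simps)
qed
lemma exist_traj:
  fixes v \<sigma> c0 :: real
  assumes v: "v \<noteq> 0" and sg: "\<sigma> = 1 \<or> \<sigma> = -1"
  defines "a \<equiv> (\<lambda>x. 4 * \<sigma> * v / (1 + exp (v * x)))"
  defines "r \<equiv> (\<lambda>x. \<sigma> * (a x)^2 / 4 - v * a x)"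
  defines "s \<equiv> (\<lambda>x. -2 * \<sigma> * r x)"
  defines "b \<equiv> (\<lambda>x. c0 - 2 * \<sigma> * a x)"
  shows "trajectory v a b r s \<and> nonconstant a b r s \<and> (\<forall>x. \<sigma> * r x < 0)"
proof -
  have s2: "\<sigma> * \<sigma> = 1" using sg by auto
  have rform: "r x = - 4 * \<sigma> * v^2 * exp (v * x) / (1 + exp (v * x))^2" for x
  proof -
    have p: "1 + exp (v * x) > 0" by (simp add: add_pos_pos)
    have "r x = \<sigma> * (4 * \<sigma> * v / (1 + exp (v * x)))^2 / 4 - v * (4 * \<sigma> * v / (1 + exp (v * x)))"
      by (simp add: r_def a_def)
    also have "\<dots> = - 4 * \<sigma> * v^2 * ((1 + exp (v * x)) - 1) / (1 + exp (v * x))^2"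
      using p s2 by (intro alg1) auto
    also have "\<dots> = - 4 * \<sigma> * v^2 * exp (v * x) / (1 + exp (v * x))^2" by simp
    finally show ?thesis .
  qed
  have sr: "\<sigma> * r x < 0" for x
  proof -
    have "\<sigma> * r x = - ((\<sigma> * \<sigma>) * 4 * v^2 * exp (v * x) / (1 + exp (v * x))^2)"
      unfolding rform by (simp add: field_simps)
    also have "\<dots> < 0"
    proof -
      have "0 < 4 * v^2 * exp (v * x) / (1 + exp (v * x))^2"
      proof -
        have q: "0 < 1 + exp (v * x)" using exp_gt_zero[of "v * x"] by linarith
        show ?thesis using v q by (intro divide_pos_pos mult_pos_pos) auto
      qed
      then show ?thesis unfolding s2 by simp
    qed
    finally show ?thesis .
  qed
  have absr: "\<bar>r x\<bar> = - \<sigma> * r x" for x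
    using sg sr[of x] by auto
  have da: "(a has_real_derivative r x) (at x)" for x
  proof -
    have p: "1 + exp (v * x) \<noteq> 0" by (metis add_pos_pos exp_gt_zero less_irrefl zero_less_one)
    have "(a has_real_derivative - (4 * \<sigma> * v * (exp (v * x) * v)) / (1 + exp (v * x))^2) (at x)"
      unfolding a_def using p by (auto intro!: derivative_eq_intros simp: power2_eq_square)
    moreover have "- (4 * \<sigma> * v * (exp (v * x) * v)) / (1 + exp (v * x))^2 = r x"
      unfolding rform by (simp add: power2_eq_square field_simps)
    ultimately show ?thesis by (rule DERIV_cong)
  qed
  have dr: "(r has_real_derivative (\<sigma> * a x / 2 - v) * r x) (at x)" for x
  proof -
    have e: "((\<lambda>x. \<sigma> * (a x)^2 / 4 - v * a x) has_real_derivative \<sigma> * (2 * a x * r x) / 4 - v * r x) (at x)"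
      by (rule derivative_eq_intros da refl | simp)+
    have req: "r = (\<lambda>x. \<sigma> * (a x)^2 / 4 - v * a x)" by (simp add: r_def)
    have "(r has_real_derivative \<sigma> * (2 * a x * r x) / 4 - v * r x) (at x)"
      using e by (simp only: req[symmetric])
    then show ?thesis by (rule DERIV_cong) (simp add: algebra_simps)
  qed
  have tr: "trajectory v a b r s"
    unfolding trajectory_def
  proof (intro allI conjI)
    fix x
    show "(a has_real_derivative r x) (at x)" by (rule da)
    show "(b has_real_derivative s x) (at x)"
      unfolding b_def s_def by (rule derivative_eq_intros da refl | simp)+
    show "(r has_real_derivative - v * r x - s x * a x / 2 + a x * \<bar>r x\<bar> / 2) (at x)"
      using dr[of x] by (rule DERIV_cong) (simp add: absr s_def algebra_simps)
    show "(s has_real_derivative - v * s x - r x * a x) (at x)"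
    proof -
      have "(s has_real_derivative -2 * \<sigma> * ((\<sigma> * a x / 2 - v) * r x)) (at x)"
        unfolding s_def by (rule derivative_eq_intros dr refl | simp)+
      then show ?thesis
      proof (rule DERIV_cong)
        have "-2 * \<sigma> * ((\<sigma> * a x / 2 - v) * r x) = - (\<sigma> * \<sigma>) * a x * r x + 2 * \<sigma> * v * r x"
          by (simp add: algebra_simps)
        then show "-2 * \<sigma> * ((\<sigma> * a x / 2 - v) * r x) = - v * s x - r x * a x"
          unfolding s2 s_def by (simp add: algebra_simps)
      qed
    qed
  qed
  have a0: "a 0 = 2 * \<sigma> * v" by (simp add: a_def)
  have a1: "a (ln 3 / v) = \<sigma> * v" using v by (simp add: a_def)
  have "a 0 \<noteq> a (ln 3 / v)" unfolding a0 a1 using v sg by auto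
  then have nc: "nonconstant a b r s" unfolding nonconstant_def state_def by blast
  show ?thesis using tr nc sr by blast
qed

lemma cases4:
  fixes e c :: real
  assumes "e = 1 \<or> e = -1" "c = -e \<or> c = 2 * e"
  obtains "e = -1" "c = 1" | "e = -1" "c = -2" | "e = 1" "c = -1" | "e = 1" "c = 2"
  using assms by auto

lemma prod0: "(\<alpha>::real) * x^2 - v * x + 0 = 0 \<Longrightarrow> x = 0 \<or> \<alpha> * x = v"
proof -
  assume "\<alpha> * x^2 - v * x + 0 = 0"
  then have "x * (\<alpha> * x - v) = 0" by (simp add: power2_eq_square algebra_simps)
  then show ?thesis by auto
qed

lemma rsign: "\<bar>r0::real\<bar> = e * r0 \<Longrightarrow> r0 \<noteq> 0 \<Longrightarrow> (e = 1 \<longrightarrow> r0 > 0) \<and> (e = -1 \<longrightarrow> r0 < 0)"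
  by auto

lemma H1pos_arith:
  fixes v e c K am bm a0 r0 :: real
  assumes v: "v > 0" and ec: "e = 1 \<or> e = -1" "c = -e \<or> c = 2 * e"
    and Km: "(e - c)/4 * am^2 - v * am + K = 0" and Kp: "(e - c)/4 * 0^2 - v * 0 + K = 0"
    and B: "bm - c * am = 2 - c * 0"
    and r0: "r0 = (e - c)/4 * a0^2 - v * a0 + K" "\<bar>r0\<bar> = e * r0" "r0 \<noteq> 0"
    and m1: "e = 1 \<longrightarrow> am < a0 \<and> a0 < 0" and m2: "e = -1 \<longrightarrow> 0 < a0 \<and> a0 < am"
  shows "(am = 4 * v \<and> bm = 2 - 8 * v \<and> e = -1) \<or> (am = -4 * v \<and> bm = 2 - 8 * v \<and> e = 1)"
proof -
  have K: "K = 0" using Kp by simp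
  have q: "am = 0 \<or> (e - c)/4 * am = v" using prod0[of "(e - c)/4" am v] Km K by simp
  have r0': "r0 = a0 * ((e - c)/4 * a0 - v)" using r0(1) K by (simp add: power2_eq_square algebra_simps)
  have sg: "(e = 1 \<longrightarrow> r0 > 0) \<and> (e = -1 \<longrightarrow> r0 < 0)" using rsign r0(2,3) by blast
  from ec show ?thesis
    by (cases rule: cases4) (use q B m1 m2 v sg r0' in \<open>auto simp: zero_less_mult_iff mult_less_0_iff\<close>)
qed

lemma H2pos_arith:
  fixes v e c K ap bp a0 r0 :: real
  assumes v: "v > 0" and ec: "e = 1 \<or> e = -1" "c = -e \<or> c = 2 * e"
    and Km: "(e - c)/4 * 0^2 - v * 0 + K = 0" and Kp: "(e - c)/4 * ap^2 - v * ap + K = 0"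
    and B: "-2 - c * 0 = bp - c * ap"
    and r0: "r0 = (e - c)/4 * a0^2 - v * a0 + K" "\<bar>r0\<bar> = e * r0" "r0 \<noteq> 0"
    and m1: "e = 1 \<longrightarrow> 0 < a0 \<and> a0 < ap" and m2: "e = -1 \<longrightarrow> ap < a0 \<and> a0 < 0"
  shows False
proof -
  have K: "K = 0" using Km by simp
  have q: "ap = 0 \<or> (e - c)/4 * ap = v" using prod0[of "(e - c)/4" ap v] Kp K by simp
  have r0': "r0 = a0 * ((e - c)/4 * a0 - v)" using r0(1) K by (simp add: power2_eq_square algebra_simps)
  have sg: "(e = 1 \<longrightarrow> r0 > 0) \<and> (e = -1 \<longrightarrow> r0 < 0)" using rsign r0(2,3) by blast
  from ec show ?thesis
    by (cases rule: cases4) (use q B m1 m2 v sg r0' in \<open>auto simp: zero_less_mult_iff mult_less_0_iff\<close>)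
qed

lemma H2neg_arith:
  fixes v e c K ap bp a0 r0 :: real
  assumes v: "v < 0" and ec: "e = 1 \<or> e = -1" "c = -e \<or> c = 2 * e"
    and Km: "(e - c)/4 * 0^2 - v * 0 + K = 0" and Kp: "(e - c)/4 * ap^2 - v * ap + K = 0"
    and B: "-2 - c * 0 = bp - c * ap"
    and r0: "r0 = (e - c)/4 * a0^2 - v * a0 + K" "\<bar>r0\<bar> = e * r0" "r0 \<noteq> 0"
    and m1: "e = 1 \<longrightarrow> 0 < a0 \<and> a0 < ap" and m2: "e = -1 \<longrightarrow> ap < a0 \<and> a0 < 0"
  shows "(ap = 4 * v \<and> bp = -8 * v - 2 \<and> e = -1) \<or> (ap = -4 * v \<and> bp = -8 * v - 2 \<and> e = 1)"
proof -
  have K: "K = 0" using Km by simp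
  have q: "ap = 0 \<or> (e - c)/4 * ap = v" using prod0[of "(e - c)/4" ap v] Kp K by simp
  have r0': "r0 = a0 * ((e - c)/4 * a0 - v)" using r0(1) K by (simp add: power2_eq_square algebra_simps)
  have sg: "(e = 1 \<longrightarrow> r0 > 0) \<and> (e = -1 \<longrightarrow> r0 < 0)" using rsign r0(2,3) by blast
  from ec show ?thesis
    by (cases rule: cases4) (use q B m1 m2 v sg r0' in \<open>auto simp: zero_less_mult_iff mult_less_0_iff\<close>)
qed

lemma H1neg_arith:
  fixes v e c K am bm a0 r0 :: real
  assumes v: "v < 0" and ec: "e = 1 \<or> e = -1" "c = -e \<or> c = 2 * e"
    and Km: "(e - c)/4 * am^2 - v * am + K = 0" and Kp: "(e - c)/4 * 0^2 - v * 0 + K = 0"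
    and B: "bm - c * am = 2 - c * 0"
    and r0: "r0 = (e - c)/4 * a0^2 - v * a0 + K" "\<bar>r0\<bar> = e * r0" "r0 \<noteq> 0"
    and m1: "e = 1 \<longrightarrow> am < a0 \<and> a0 < 0" and m2: "e = -1 \<longrightarrow> 0 < a0 \<and> a0 < am"
  shows False
proof -
  have K: "K = 0" using Kp by simp
  have q: "am = 0 \<or> (e - c)/4 * am = v" using prod0[of "(e - c)/4" am v] Km K by simp
  have r0': "r0 = a0 * ((e - c)/4 * a0 - v)" using r0(1) K by (simp add: power2_eq_square algebra_simps)
  have sg: "(e = 1 \<longrightarrow> r0 > 0) \<and> (e = -1 \<longrightarrow> r0 < 0)" using rsign r0(2,3) by blast
  from ec show ?thesis
    by (cases rule: cases4) (use q B m1 m2 v sg r0' in \<open>auto simp: zero_less_mult_iff mult_less_0_iff\<close>)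
qed

lemma v0_arith:
  fixes e c K am ap a0 :: real
  assumes ec: "e = 1 \<or> e = -1" "c = -e \<or> c = 2 * e"
    and Km: "(e - c)/4 * am^2 - 0 * am + K = 0" and Kp: "(e - c)/4 * ap^2 - 0 * ap + K = 0"
    and m1: "e = 1 \<longrightarrow> am < a0 \<and> a0 < ap" and m2: "e = -1 \<longrightarrow> ap < a0 \<and> a0 < am"
  shows "am \<noteq> 0 \<and> ap \<noteq> 0"
proof -
  have ne: "e - c \<noteq> 0" using ec by auto
  have ne4: "(e - c)/4 \<noteq> 0" using ne by simp
  have "(e - c)/4 * am^2 = (e - c)/4 * ap^2" using Km Kp by linarith
  then have "am^2 = ap^2" using mult_left_cancel[OF ne4] by blast
  then have "am = ap \<or> am = - ap" by (simp add: power2_eq_iff)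
  moreover have "am \<noteq> ap" using m1 m2 ec by auto
  ultimately show ?thesis by auto
qed

lemma exist_lims:
  fixes v \<sigma> c0 :: real
  assumes sg: "\<sigma> = 1 \<or> \<sigma> = -1"
  defines "a \<equiv> (\<lambda>x. 4 * \<sigma> * v / (1 + exp (v * x)))"
  defines "r \<equiv> (\<lambda>x. \<sigma> * (a x)^2 / 4 - v * a x)"
  defines "s \<equiv> (\<lambda>x. -2 * \<sigma> * r x)"
  defines "b \<equiv> (\<lambda>x. c0 - 2 * \<sigma> * a x)"
  shows "v > 0 \<Longrightarrow> (state a b r s \<longlongrightarrow> (4 * \<sigma> * v, c0 - 8 * v, 0, 0)) at_bot \<and> (state a b r s \<longlongrightarrow> (0, c0, 0, 0)) at_top"
    and "v < 0 \<Longrightarrow> (state a b r s \<longlongrightarrow> (0, c0, 0, 0)) at_bot \<and> (state a b r s \<longlongrightarrow> (4 * \<sigma> * v, c0 - 8 * v, 0, 0)) at_top"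
proof -
  have s2: "\<sigma> * \<sigma> = 1" using sg by auto
  have glim: "(state a b r s \<longlongrightarrow> (L, c0 - 2 * \<sigma> * L, \<sigma> * L^2 / 4 - v * L, -2 * \<sigma> * (\<sigma> * L^2 / 4 - v * L))) F"
    if "(a \<longlongrightarrow> L) F" for L F
    unfolding state_def b_def r_def s_def by (intro tendsto_intros that) simp_all
  have e1: "c0 - 2 * \<sigma> * (4 * \<sigma> * v) = c0 - 8 * v"
  proof -
    have "c0 - 2 * \<sigma> * (4 * \<sigma> * v) = c0 - 8 * v * (\<sigma> * \<sigma>)" by (simp add: algebra_simps)
    then show ?thesis unfolding s2 by simp
  qed
  have e2: "\<sigma> * (4 * \<sigma> * v)^2 / 4 - v * (4 * \<sigma> * v) = 0"
  proof -
    have "\<sigma> * (4 * \<sigma> * v)^2 / 4 - v * (4 * \<sigma> * v) = 4 * v^2 * \<sigma> * (\<sigma> * \<sigma>) - 4 * v^2 * \<sigma>"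
      by (simp add: power2_eq_square algebra_simps)
    then show ?thesis unfolding s2 by simp
  qed
  have L4: "(state a b r s \<longlongrightarrow> (4 * \<sigma> * v, c0 - 8 * v, 0, 0)) F" if "(a \<longlongrightarrow> 4 * \<sigma> * v) F" for F
    using glim[OF that] unfolding e1 e2 by simp
  have L0: "(state a b r s \<longlongrightarrow> (0, c0, 0, 0)) F" if "(a \<longlongrightarrow> 0) F" for F
    using glim[OF that] by simp
  have ah: "a = (\<lambda>x. 4 * \<sigma> * v * (1 / (1 + exp (v * x))))" by (simp add: a_def)
  show "v > 0 \<Longrightarrow> (state a b r s \<longlongrightarrow> (4 * \<sigma> * v, c0 - 8 * v, 0, 0)) at_bot \<and> (state a b r s \<longlongrightarrow> (0, c0, 0, 0)) at_top"
  proof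
    assume v: "v > 0"
    have "((\<lambda>x. 1 / (1 + exp (v * x))) \<longlongrightarrow> 1) at_bot" using v by real_asymp
    then have "(a \<longlongrightarrow> 4 * \<sigma> * v * 1) at_bot" unfolding ah by (intro tendsto_intros)
    then show "(state a b r s \<longlongrightarrow> (4 * \<sigma> * v, c0 - 8 * v, 0, 0)) at_bot" using L4 by simp
    assume v: "v > 0"
    have "((\<lambda>x. 1 / (1 + exp (v * x))) \<longlongrightarrow> 0) at_top" using v by real_asymp
    then have "(a \<longlongrightarrow> 4 * \<sigma> * v * 0) at_top" unfolding ah by (intro tendsto_intros)
    then show "(state a b r s \<longlongrightarrow> (0, c0, 0, 0)) at_top" using L0 by simp
  qed
  show "v < 0 \<Longrightarrow> (state a b r s \<longlongrightarrow> (0, c0, 0, 0)) at_bot \<and> (state a b r s \<longlongrightarrow> (4 * \<sigma> * v, c0 - 8 * v, 0, 0)) at_top"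
  proof
    assume v: "v < 0"
    have "((\<lambda>x. 1 / (1 + exp (v * x))) \<longlongrightarrow> 0) at_bot" using v by real_asymp
    then have "(a \<longlongrightarrow> 4 * \<sigma> * v * 0) at_bot" unfolding ah by (intro tendsto_intros)
    then show "(state a b r s \<longlongrightarrow> (0, c0, 0, 0)) at_bot" using L0 by simp
    assume v: "v < 0"
    have "((\<lambda>x. 1 / (1 + exp (v * x))) \<longlongrightarrow> 1) at_top" using v by real_asymp
    then have "(a \<longlongrightarrow> 4 * \<sigma> * v * 1) at_top" unfolding ah by (intro tendsto_intros)
    then show "(state a b r s \<longlongrightarrow> (4 * \<sigma> * v, c0 - 8 * v, 0, 0)) at_top" using L4 by simp
  qed
qed

lemma exist_all:
  fixes v \<sigma> c0 :: real
  assumes v: "v \<noteq> 0" and sg: "\<sigma> = 1 \<or> \<sigma> = -1"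
  shows "\<exists>a b r s. trajectory v a b r s \<and> nonconstant a b r s
    \<and> (v > 0 \<longrightarrow> (state a b r s \<longlongrightarrow> (4 * \<sigma> * v, c0 - 8 * v, 0, 0)) at_bot \<and> (state a b r s \<longlongrightarrow> (0, c0, 0, 0)) at_top)
    \<and> (v < 0 \<longrightarrow> (state a b r s \<longlongrightarrow> (0, c0, 0, 0)) at_bot \<and> (state a b r s \<longlongrightarrow> (4 * \<sigma> * v, c0 - 8 * v, 0, 0)) at_top)"
  using exist_traj[OF v sg, of c0] exist_lims[OF sg, of v c0] by blast


lemma part_pos:
  fixes v :: real
  assumes v: "v > 0"
  shows "{(a0, b0). \<exists>a b r s. trajectory v a b r s \<and> nonconstant a b r s \<and> H1 a0 b0 a b r s}
        = {(4 * v, -8 * v + 2), (-4 * v, -8 * v + 2)}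
    \<and> (\<forall>a b r s. trajectory v a b r s \<and> nonconstant a b r s \<and> H1 (4 * v) (-8 * v + 2) a b r s
          \<longrightarrow> (\<forall>x. r x < 0))
    \<and> (\<forall>a b r s. trajectory v a b r s \<and> nonconstant a b r s \<and> H1 (-4 * v) (-8 * v + 2) a b r s
          \<longrightarrow> (\<forall>x. r x > 0))
    \<and> (\<forall>a0 b0 a b r s. \<not> (trajectory v a b r s \<and> nonconstant a b r s \<and> H2 a0 b0 a b r s))"
proof -
  have key: "(a0 = 4 * v \<and> b0 = 2 - 8 * v \<and> (\<forall>x. r x < 0)) \<or> (a0 = -4 * v \<and> b0 = 2 - 8 * v \<and> (\<forall>x. r x > 0))"
    if tr: "trajectory v a b r s" and nc: "nonconstant a b r s" and h: "H1 a0 b0 a b r s" for a0 b0 a b r s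
  proof -
    have lb: "(state a b r s \<longlongrightarrow> (a0, b0, 0, 0)) at_bot" and lt: "(state a b r s \<longlongrightarrow> (0, 2, 0, 0)) at_top"
      using h unfolding H1_def by auto
    obtain e c K where ec: "e = 1 \<or> e = -1" "c = -e \<or> c = 2 * e"
      and all: "\<forall>x. r x \<noteq> 0 \<and> \<bar>r x\<bar> = e * r x \<and> s x = c * r x \<and> r x = (e - c)/4 * (a x)^2 - v * a x + K"
      and Km: "(e - c)/4 * a0^2 - v * a0 + K = 0" and Kp: "(e - c)/4 * 0^2 - v * 0 + K = 0"
      and BB: "b0 - c * a0 = 2 - c * 0"
      and mono: "\<forall>x. (e = 1 \<longrightarrow> a0 < a x \<and> a x < 0) \<and> (e = -1 \<longrightarrow> 0 < a x \<and> a x < a0)"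
      using main[OF tr nc lb lt] by blast
    have res: "(a0 = 4 * v \<and> b0 = 2 - 8 * v \<and> e = -1) \<or> (a0 = -4 * v \<and> b0 = 2 - 8 * v \<and> e = 1)"
      using H1pos_arith[OF v ec Km Kp BB, of "r 0" "a 0"] all mono by blast
    have sgn: "(e = 1 \<longrightarrow> r x > 0) \<and> (e = -1 \<longrightarrow> r x < 0)" for x
      using all rsign by blast
    show ?thesis using res sgn by auto
  qed
  have A: "{(a0, b0). \<exists>a b r s. trajectory v a b r s \<and> nonconstant a b r s \<and> H1 a0 b0 a b r s}
        = {(4 * v, -8 * v + 2), (-4 * v, -8 * v + 2)}"
  proof (intro equalityI subsetI)
    fix p assume "p \<in> {(a0, b0). \<exists>a b r s. trajectory v a b r s \<and> nonconstant a b r s \<and> H1 a0 b0 a b r s}"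
    then obtain a0 b0 a b r s where p: "p = (a0, b0)" and "trajectory v a b r s" "nonconstant a b r s" "H1 a0 b0 a b r s"
      by blast
    then have "(a0 = 4 * v \<and> b0 = 2 - 8 * v) \<or> (a0 = -4 * v \<and> b0 = 2 - 8 * v)" using key by blast
    then show "p \<in> {(4 * v, -8 * v + 2), (-4 * v, -8 * v + 2)}" using p by auto
  next
    fix p assume p: "p \<in> {(4 * v, -8 * v + 2), (-4 * v, -8 * v + 2)}"
    have ex: "\<exists>a b r s. trajectory v a b r s \<and> nonconstant a b r s \<and> H1 (4 * \<sigma> * v) (-8 * v + 2) a b r s"
      if sg: "\<sigma> = 1 \<or> \<sigma> = -1" for \<sigma>
    proof -
      have e: "2 - 8 * v = -8 * v + 2" by simp
      obtain a b r s where "trajectory v a b r s" "nonconstant a b r s"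
        "(state a b r s \<longlongrightarrow> (4 * \<sigma> * v, -8 * v + 2, 0, 0)) at_bot" "(state a b r s \<longlongrightarrow> (0, 2, 0, 0)) at_top"
        using exist_all[of v \<sigma> 2] v sg unfolding e by auto
      then show ?thesis unfolding H1_def by blast
    qed
    from p show "p \<in> {(a0, b0). \<exists>a b r s. trajectory v a b r s \<and> nonconstant a b r s \<and> H1 a0 b0 a b r s}"
      using ex[of 1] ex[of "-1"] by auto
  qed
  have B: "\<forall>a b r s. trajectory v a b r s \<and> nonconstant a b r s \<and> H1 (4 * v) (-8 * v + 2) a b r s
          \<longrightarrow> (\<forall>x. r x < 0)"
    using key v by fastforce
  have C: "\<forall>a b r s. trajectory v a b r s \<and> nonconstant a b r s \<and> H1 (-4 * v) (-8 * v + 2) a b r s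
          \<longrightarrow> (\<forall>x. r x > 0)"
    using key v by fastforce
  have D: "\<not> (trajectory v a b r s \<and> nonconstant a b r s \<and> H2 a0 b0 a b r s)" for a0 b0 a b r s
  proof
    assume "trajectory v a b r s \<and> nonconstant a b r s \<and> H2 a0 b0 a b r s"
    then have tr: "trajectory v a b r s" and nc: "nonconstant a b r s"
      and lb: "(state a b r s \<longlongrightarrow> (0, -2, 0, 0)) at_bot" and lt: "(state a b r s \<longlongrightarrow> (a0, b0, 0, 0)) at_top"
      unfolding H2_def by auto
    obtain e c K where ec: "e = 1 \<or> e = -1" "c = -e \<or> c = 2 * e"
      and all: "\<forall>x. r x \<noteq> 0 \<and> \<bar>r x\<bar> = e * r x \<and> s x = c * r x \<and> r x = (e - c)/4 * (a x)^2 - v * a x + K"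
      and Km: "(e - c)/4 * 0^2 - v * 0 + K = 0" and Kp: "(e - c)/4 * a0^2 - v * a0 + K = 0"
      and BB: "-2 - c * 0 = b0 - c * a0"
      and mono: "\<forall>x. (e = 1 \<longrightarrow> 0 < a x \<and> a x < a0) \<and> (e = -1 \<longrightarrow> a0 < a x \<and> a x < 0)"
      using main[OF tr nc lb lt] by blast
    show False
      using H2pos_arith[OF v ec Km Kp BB, of "r 0" "a 0"] all mono by blast
  qed
  show ?thesis using A B C D by blast
qed

lemma part_neg:
  fixes v :: real
  assumes v: "v < 0"
  shows "{(a0, b0). \<exists>a b r s. trajectory v a b r s \<and> nonconstant a b r s \<and> H2 a0 b0 a b r s}
        = {(4 * v, -8 * v - 2), (-4 * v, -8 * v - 2)}
    \<and> (\<forall>a b r s. trajectory v a b r s \<and> nonconstant a b r s \<and> H2 (4 * v) (-8 * v - 2) a b r s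
          \<longrightarrow> (\<forall>x. r x < 0))
    \<and> (\<forall>a b r s. trajectory v a b r s \<and> nonconstant a b r s \<and> H2 (-4 * v) (-8 * v - 2) a b r s
          \<longrightarrow> (\<forall>x. r x > 0))
    \<and> (\<forall>a0 b0 a b r s. \<not> (trajectory v a b r s \<and> nonconstant a b r s \<and> H1 a0 b0 a b r s))"
proof -
  have key: "(a0 = 4 * v \<and> b0 = -8 * v - 2 \<and> (\<forall>x. r x < 0)) \<or> (a0 = -4 * v \<and> b0 = -8 * v - 2 \<and> (\<forall>x. r x > 0))"
    if tr: "trajectory v a b r s" and nc: "nonconstant a b r s" and h: "H2 a0 b0 a b r s" for a0 b0 a b r s
  proof -
    have lb: "(state a b r s \<longlongrightarrow> (0, -2, 0, 0)) at_bot" and lt: "(state a b r s \<longlongrightarrow> (a0, b0, 0, 0)) at_top"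
      using h unfolding H2_def by auto
    obtain e c K where ec: "e = 1 \<or> e = -1" "c = -e \<or> c = 2 * e"
      and all: "\<forall>x. r x \<noteq> 0 \<and> \<bar>r x\<bar> = e * r x \<and> s x = c * r x \<and> r x = (e - c)/4 * (a x)^2 - v * a x + K"
      and Km: "(e - c)/4 * 0^2 - v * 0 + K = 0" and Kp: "(e - c)/4 * a0^2 - v * a0 + K = 0"
      and BB: "-2 - c * 0 = b0 - c * a0"
      and mono: "\<forall>x. (e = 1 \<longrightarrow> 0 < a x \<and> a x < a0) \<and> (e = -1 \<longrightarrow> a0 < a x \<and> a x < 0)"
      using main[OF tr nc lb lt] by blast
    have res: "(a0 = 4 * v \<and> b0 = -8 * v - 2 \<and> e = -1) \<or> (a0 = -4 * v \<and> b0 = -8 * v - 2 \<and> e = 1)"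
      using H2neg_arith[OF v ec Km Kp BB, of "r 0" "a 0"] all mono by blast
    have sgn: "(e = 1 \<longrightarrow> r x > 0) \<and> (e = -1 \<longrightarrow> r x < 0)" for x
      using all rsign by blast
    show ?thesis using res sgn by auto
  qed
  have A: "{(a0, b0). \<exists>a b r s. trajectory v a b r s \<and> nonconstant a b r s \<and> H2 a0 b0 a b r s}
        = {(4 * v, -8 * v - 2), (-4 * v, -8 * v - 2)}"
  proof (intro equalityI subsetI)
    fix p assume "p \<in> {(a0, b0). \<exists>a b r s. trajectory v a b r s \<and> nonconstant a b r s \<and> H2 a0 b0 a b r s}"
    then obtain a0 b0 a b r s where p: "p = (a0, b0)" and "trajectory v a b r s" "nonconstant a b r s" "H2 a0 b0 a b r s"
      by blast
    then have "(a0 = 4 * v \<and> b0 = -8 * v - 2) \<or> (a0 = -4 * v \<and> b0 = -8 * v - 2)" using key by blast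
    then show "p \<in> {(4 * v, -8 * v - 2), (-4 * v, -8 * v - 2)}" using p by auto
  next
    fix p assume p: "p \<in> {(4 * v, -8 * v - 2), (-4 * v, -8 * v - 2)}"
    have ex: "\<exists>a b r s. trajectory v a b r s \<and> nonconstant a b r s \<and> H2 (4 * \<sigma> * v) (-8 * v - 2) a b r s"
      if sg: "\<sigma> = 1 \<or> \<sigma> = -1" for \<sigma>
    proof -
      have e: "-2 - 8 * v = -8 * v - 2" by simp
      obtain a b r s where "trajectory v a b r s" "nonconstant a b r s"
        "(state a b r s \<longlongrightarrow> (0, -2, 0, 0)) at_bot" "(state a b r s \<longlongrightarrow> (4 * \<sigma> * v, -8 * v - 2, 0, 0)) at_top"
        using exist_all[of v \<sigma> "-2"] v sg unfolding e by auto
      then show ?thesis unfolding H2_def by blast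
    qed
    from p show "p \<in> {(a0, b0). \<exists>a b r s. trajectory v a b r s \<and> nonconstant a b r s \<and> H2 a0 b0 a b r s}"
      using ex[of 1] ex[of "-1"] by auto
  qed
  have B: "\<forall>a b r s. trajectory v a b r s \<and> nonconstant a b r s \<and> H2 (4 * v) (-8 * v - 2) a b r s
          \<longrightarrow> (\<forall>x. r x < 0)"
    using key v by fastforce
  have C: "\<forall>a b r s. trajectory v a b r s \<and> nonconstant a b r s \<and> H2 (-4 * v) (-8 * v - 2) a b r s
          \<longrightarrow> (\<forall>x. r x > 0)"
    using key v by fastforce
  have D: "\<not> (trajectory v a b r s \<and> nonconstant a b r s \<and> H1 a0 b0 a b r s)" for a0 b0 a b r s
  proof
    assume "trajectory v a b r s \<and> nonconstant a b r s \<and> H1 a0 b0 a b r s"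
    then have tr: "trajectory v a b r s" and nc: "nonconstant a b r s"
      and lb: "(state a b r s \<longlongrightarrow> (a0, b0, 0, 0)) at_bot" and lt: "(state a b r s \<longlongrightarrow> (0, 2, 0, 0)) at_top"
      unfolding H1_def by auto
    obtain e c K where ec: "e = 1 \<or> e = -1" "c = -e \<or> c = 2 * e"
      and all: "\<forall>x. r x \<noteq> 0 \<and> \<bar>r x\<bar> = e * r x \<and> s x = c * r x \<and> r x = (e - c)/4 * (a x)^2 - v * a x + K"
      and Km: "(e - c)/4 * a0^2 - v * a0 + K = 0" and Kp: "(e - c)/4 * 0^2 - v * 0 + K = 0"
      and BB: "b0 - c * a0 = 2 - c * 0"
      and mono: "\<forall>x. (e = 1 \<longrightarrow> a0 < a x \<and> a x < 0) \<and> (e = -1 \<longrightarrow> 0 < a x \<and> a x < a0)"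
      using main[OF tr nc lb lt] by blast
    show False
      using H1neg_arith[OF v ec Km Kp BB, of "r 0" "a 0"] all mono by blast
  qed
  show ?thesis using A B C D by blast
qed

lemma part_zero:
  "\<forall>a b r s am bm ap bp. trajectory 0 a b r s \<and> nonconstant a b r s
        \<and> (state a b r s \<longlongrightarrow> (am, bm, 0, 0)) at_bot
        \<and> (state a b r s \<longlongrightarrow> (ap, bp, 0, 0)) at_top
        \<longrightarrow> am \<noteq> 0 \<and> ap \<noteq> 0"
proof (intro allI impI)
  fix a b r s :: "real \<Rightarrow> real" and am bm ap bp :: real
  assume h: "trajectory 0 a b r s \<and> nonconstant a b r s
        \<and> (state a b r s \<longlongrightarrow> (am, bm, 0, 0)) at_bot
        \<and> (state a b r s \<longlongrightarrow> (ap, bp, 0, 0)) at_top"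
  obtain e c K where ec: "e = 1 \<or> e = -1" "c = -e \<or> c = 2 * e"
    and Km: "(e - c)/4 * am^2 - 0 * am + K = 0" and Kp: "(e - c)/4 * ap^2 - 0 * ap + K = 0"
    and mono: "\<forall>x. (e = 1 \<longrightarrow> am < a x \<and> a x < ap) \<and> (e = -1 \<longrightarrow> ap < a x \<and> a x < am)"
    using main[of 0 a b r s am bm ap bp] h by blast
  show "am \<noteq> 0 \<and> ap \<noteq> 0"
    using v0_arith[OF ec Km Kp, of "a 0"] mono by blast
qed

theorem theorem5:
  shows
   "(\<forall>v>0.
      {(a0, b0). \<exists>a b r s. trajectory v a b r s \<and> nonconstant a b r s \<and> H1 a0 b0 a b r s}
        = {(4 * v, -8 * v + 2), (-4 * v, -8 * v + 2)}
    \<and> (\<forall>a b r s. trajectory v a b r s \<and> nonconstant a b r s \<and> H1 (4 * v) (-8 * v + 2) a b r s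
          \<longrightarrow> (\<forall>x. r x < 0))
    \<and> (\<forall>a b r s. trajectory v a b r s \<and> nonconstant a b r s \<and> H1 (-4 * v) (-8 * v + 2) a b r s
          \<longrightarrow> (\<forall>x. r x > 0))
    \<and> (\<forall>a0 b0 a b r s. \<not> (trajectory v a b r s \<and> nonconstant a b r s \<and> H2 a0 b0 a b r s)))
  \<and> (\<forall>a b r s am bm ap bp. trajectory 0 a b r s \<and> nonconstant a b r s
        \<and> (state a b r s \<longlongrightarrow> (am, bm, 0, 0)) at_bot
        \<and> (state a b r s \<longlongrightarrow> (ap, bp, 0, 0)) at_top
        \<longrightarrow> am \<noteq> 0 \<and> ap \<noteq> 0)
  \<and> (\<forall>v<0.
      {(a0, b0). \<exists>a b r s. trajectory v a b r s \<and> nonconstant a b r s \<and> H2 a0 b0 a b r s}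
        = {(4 * v, -8 * v - 2), (-4 * v, -8 * v - 2)}
    \<and> (\<forall>a b r s. trajectory v a b r s \<and> nonconstant a b r s \<and> H2 (4 * v) (-8 * v - 2) a b r s
          \<longrightarrow> (\<forall>x. r x < 0))
    \<and> (\<forall>a b r s. trajectory v a b r s \<and> nonconstant a b r s \<and> H2 (-4 * v) (-8 * v - 2) a b r s
          \<longrightarrow> (\<forall>x. r x > 0))
    \<and> (\<forall>a0 b0 a b r s. \<not> (trajectory v a b r s \<and> nonconstant a b r s \<and> H1 a0 b0 a b r s)))"
proof -
  have 1: "\<forall>v>0.
      {(a0, b0). \<exists>a b r s. trajectory v a b r s \<and> nonconstant a b r s \<and> H1 a0 b0 a b r s}
        = {(4 * v, -8 * v + 2), (-4 * v, -8 * v + 2)}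
    \<and> (\<forall>a b r s. trajectory v a b r s \<and> nonconstant a b r s \<and> H1 (4 * v) (-8 * v + 2) a b r s
          \<longrightarrow> (\<forall>x. r x < 0))
    \<and> (\<forall>a b r s. trajectory v a b r s \<and> nonconstant a b r s \<and> H1 (-4 * v) (-8 * v + 2) a b r s
          \<longrightarrow> (\<forall>x. r x > 0))
    \<and> (\<forall>a0 b0 a b r s. \<not> (trajectory v a b r s \<and> nonconstant a b r s \<and> H2 a0 b0 a b r s))"
    by (intro allI impI part_pos)
  have 3: "\<forall>v<0.
      {(a0, b0). \<exists>a b r s. trajectory v a b r s \<and> nonconstant a b r s \<and> H2 a0 b0 a b r s}
        = {(4 * v, -8 * v - 2), (-4 * v, -8 * v - 2)}
    \<and> (\<forall>a b r s. trajectory v a b r s \<and> nonconstant a b r s \<and> H2 (4 * v) (-8 * v - 2) a b r s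
          \<longrightarrow> (\<forall>x. r x < 0))
    \<and> (\<forall>a b r s. trajectory v a b r s \<and> nonconstant a b r s \<and> H2 (-4 * v) (-8 * v - 2) a b r s
          \<longrightarrow> (\<forall>x. r x > 0))
    \<and> (\<forall>a0 b0 a b r s. \<not> (trajectory v a b r s \<and> nonconstant a b r s \<and> H1 a0 b0 a b r s))"
    by (intro allI impI part_neg)
  show ?thesis by (rule conjI[OF 1 conjI[OF part_zero 3]])
qed

end
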